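(* Let $R$ be a commutative ring. The flat topology and the Zariski topology on $\mathrm{Spec}(R)$ coincide if and only if every prime ideal of $R$ is maximal.
   Context: The flat topology on $\mathrm{Spec}(R)$ is the topology having as a basis of open sets the sets $V(I)=\{\mathfrak p\in\mathrm{Spec}(R):I\subseteq\mathfrak p\}$ with $I$ ranging over finitely generated ideals of $R$ (Hochster's inverse topology). *)

theory Defs
  imports "HOL-Analysis.Analysis" "HOL-Algebra.Ideal"
begin

definition Spec :: "('a, 'b) ring_scheme \<Rightarrow> 'a set set" where
  "Spec R = {P. primeideal P R}"

definition Vset :: "('a, 'b) ring_scheme \<Rightarrow> 'a set \<Rightarrow> 'a set set" where
  "Vset R I = {P \<in> Spec R. I \<subseteq> P}"

definition fin_gen_ideal :: "('a, 'b) ring_scheme \<Rightarrow> 'a set \<Rightarrow> bool" where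
  "fin_gen_ideal R I \<longleftrightarrow> ideal I R \<and> (\<exists>S. finite S \<and> S \<subseteq> carrier R \<and> I = Idl\<^bsub>R\<^esub> S)"

definition zariski_topology :: "('a, 'b) ring_scheme \<Rightarrow> 'a set topology" where
  "zariski_topology R = topology_generated_by {Spec R - Vset R I | I. ideal I R}"

definition flat_topology :: "('a, 'b) ring_scheme \<Rightarrow> 'a set topology" where
  "flat_topology R = topology_generated_by {Vset R I | I. fin_gen_ideal R I}"

end

theory Submission
  imports Defs "HOL-Algebra.Ring_Divisibility"
begin

lemma (in cring) prime_avoid:
  assumes I: "ideal I R" and T: "T \<subseteq> carrier R" "\<one> \<in> T"
    and Tm: "\<And>x y. x \<in> T \<Longrightarrow> y \<in> T \<Longrightarrow> x \<otimes> y \<in> T"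
    and dis: "I \<inter> T = {}"
  shows "\<exists>Q. primeideal Q R \<and> I \<subseteq> Q \<and> Q \<inter> T = {}"
proof -
  define F where "F = {J. ideal J R \<and> I \<subseteq> J \<and> J \<inter> T = {}}"
  have "\<exists>M\<in>F. \<forall>J\<in>F. M \<subseteq> J \<longrightarrow> J = M"
  proof (rule subset_Zorn)
    fix C assume C: "subset.chain F C"
    show "\<exists>U\<in>F. \<forall>J\<in>C. J \<subseteq> U"
    proof (cases "C = {}")
      case True
      then show ?thesis using I dis by (auto simp: F_def)
    next
      case False
      have "subset.chain {I. ideal I R} C"
        using C unfolding pred_on.chain_def F_def by auto
      from chain_Union_is_ideal[OF this] False have "ideal (\<Union>C) R" by simp
      moreover have "I \<subseteq> \<Union>C" using False C unfolding pred_on.chain_def F_def by blast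
      moreover have "\<Union>C \<inter> T = {}" using C unfolding pred_on.chain_def F_def by blast
      ultimately show ?thesis unfolding F_def by blast
    qed
  qed
  then obtain M where MF: "M \<in> F" and Mmax: "\<And>J. J \<in> F \<Longrightarrow> M \<subseteq> J \<Longrightarrow> J = M" by blast
  have Mi: "ideal M R" and IM: "I \<subseteq> M" and MT: "M \<inter> T = {}" using MF by (auto simp: F_def)
  have key: "\<exists>t\<in>T. \<exists>q\<in>M. \<exists>r\<in>carrier R. t = q \<oplus> r \<otimes> c" if c: "c \<in> carrier R" "c \<notin> M" for c
  proof -
    define J where "J = set_add R M (PIdl c)"
    have Ji: "ideal J R" unfolding J_def by (intro add_ideals Mi cgenideal_ideal c)
    have Jel: "J = {q \<oplus> r \<otimes> c | q r. q \<in> M \<and> r \<in> carrier R}"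
      unfolding J_def set_add_def' cgenideal_def by blast
    have MJ: "M \<subseteq> J"
    proof
      fix q assume "q \<in> M"
      moreover then have "q = q \<oplus> \<zero> \<otimes> c" using ideal.Icarr[OF Mi] c by simp
      ultimately show "q \<in> J" unfolding Jel by blast
    qed
    have "c = \<zero> \<oplus> \<one> \<otimes> c" using c by simp
    then have "c \<in> J" unfolding Jel using additive_subgroup.zero_closed[OF ideal.axioms(1)[OF Mi]] by blast
    then have "J \<noteq> M" using c by blast
    then have "J \<notin> F" using Mmax MJ by blast
    then have "J \<inter> T \<noteq> {}" using Ji IM MJ unfolding F_def by blast
    then show ?thesis unfolding Jel by blast
  qed
  have "primeideal M R"
  proof (rule primeidealI[OF Mi is_cring])
    show "carrier R \<noteq> M" using T MT by blast
    fix a b assume ab: "a \<in> carrier R" "b \<in> carrier R" "a \<otimes> b \<in> M"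
    show "a \<in> M \<or> b \<in> M"
    proof (rule ccontr)
      assume "\<not> (a \<in> M \<or> b \<in> M)"
      then obtain t1 q1 r1 t2 q2 r2 where 1: "t1 \<in> T" "q1 \<in> M" "r1 \<in> carrier R" "t1 = q1 \<oplus> r1 \<otimes> a"
        and 2: "t2 \<in> T" "q2 \<in> M" "r2 \<in> carrier R" "t2 = q2 \<oplus> r2 \<otimes> b"
        using key ab by meson
      have q: "q1 \<in> carrier R" "q2 \<in> carrier R" using 1 2 ideal.Icarr[OF Mi] by auto
      have t2c: "t2 \<in> carrier R" using 2 T by auto
      have "t1 \<otimes> t2 = q1 \<otimes> t2 \<oplus> ((r1 \<otimes> a) \<otimes> q2 \<oplus> (r1 \<otimes> r2) \<otimes> (a \<otimes> b))"
        using 1 2 q ab by (simp add: l_distr r_distr m_ac a_ac)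
      moreover have "q1 \<otimes> t2 \<in> M" using 1 t2c ideal.I_r_closed[OF Mi] by blast
      moreover have "(r1 \<otimes> a) \<otimes> q2 \<in> M" using 1 2 ab ideal.I_l_closed[OF Mi] by blast
      moreover have "(r1 \<otimes> r2) \<otimes> (a \<otimes> b) \<in> M" using 1 2 ab ideal.I_l_closed[OF Mi] by blast
      ultimately have "t1 \<otimes> t2 \<in> M"
        by (metis Mi additive_subgroup.a_closed ideal.axioms(1))
      moreover have "t1 \<otimes> t2 \<in> T" using Tm 1 2 by blast
      ultimately show False using MT by blast
    qed
  qed
  then show ?thesis using IM MT by blast
qed

lemma (in primeideal) pow_mem:
  assumes "x \<in> carrier R" "x [^] (n::nat) \<in> I" shows "x \<in> I"
  using assms(2)
proof (induction n)
  case 0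
  then show ?case using one_imp_carrier I_notcarr by simp
next
  case (Suc n)
  then have "x [^] n \<otimes> x \<in> I" by simp
  then show ?case using I_prime[of "x [^] n" x] assms(1) Suc.IH by auto
qed


lemma gen_open_local:
  assumes "\<And>x. x \<in> U \<Longrightarrow> \<exists>W. generate_topology_on B W \<and> x \<in> W \<and> W \<subseteq> U"
  shows "generate_topology_on B U"
proof -
  have "U = \<Union>{W. generate_topology_on B W \<and> W \<subseteq> U}" using assms by blast
  moreover have "generate_topology_on B (\<Union>{W. generate_topology_on B W \<and> W \<subseteq> U})"
    by (rule generate_topology_on.UN) blast
  ultimately show ?thesis by simp
qed

lemma gen_mono:
  assumes "\<And>s. s \<in> A \<Longrightarrow> generate_topology_on B s" "generate_topology_on A U"
  shows "generate_topology_on B U"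
  using assms(2)
  by (induction rule: generate_topology_on.induct)
     (auto intro: generate_topology_on.intros assms(1))

lemma (in cring) main:
  "flat_topology R = zariski_topology R \<longleftrightarrow> (\<forall>P. primeideal P R \<longrightarrow> maximalideal P R)"
proof -
  let ?ZB = "{Spec R - Vset R I | I. ideal I R}"
  let ?FB = "{Vset R I | I. fin_gen_ideal R I}"
  show ?thesis
  proof
    assume eq: "flat_topology R = zariski_topology R"
    show "\<forall>P. primeideal P R \<longrightarrow> maximalideal P R"
    proof (intro allI impI, rule ccontr)
      fix P assume P: "primeideal P R" "\<not> maximalideal P R"
      have Pi: "ideal P R" using P(1) primeideal.axioms(1) by blast
      obtain J where J: "ideal J R" "P \<subseteq> J" "J \<subseteq> carrier R" "J \<noteq> P" "J \<noteq> carrier R"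
        using maximalidealI[OF Pi primeideal.I_notcarr[OF P(1)]] P(2) by blast
      obtain f where f: "f \<in> J" "f \<notin> P" using J by blast
      have fc: "f \<in> carrier R" using f J by blast
      have "J \<inter> {\<one>} = {}" using ideal.one_imp_carrier[OF J(1)] J(5) by auto
      then obtain M where M: "primeideal M R" "J \<subseteq> M"
        using prime_avoid[OF J(1), of "{\<one>}"] by auto
      have Mi: "ideal M R" using M(1) primeideal.axioms(1) by blast
      have "fin_gen_ideal R (Idl {f})" unfolding fin_gen_ideal_def
        using genideal_ideal[of "{f}"] fc by auto
      then have "openin (flat_topology R) (Vset R (Idl {f}))"
        unfolding flat_topology_def by (intro topology_generated_by_Basis) blast
      then have gen: "generate_topology_on ?ZB (Vset R (Idl {f}))"
        unfolding eq zariski_topology_def openin_topology_generated_by_iff .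
      have sp: "M \<in> U \<longrightarrow> P \<in> U" if "generate_topology_on ?ZB U" for U
        using that
      proof (induction rule: generate_topology_on.induct)
        case (Basis s)
        then obtain I where I: "s = Spec R - Vset R I" by blast
        show ?case
        proof
          assume "M \<in> s"
          then have "\<not> I \<subseteq> M" unfolding I Vset_def by blast
          then have "\<not> I \<subseteq> P" using M(2) J(2) by blast
          then show "P \<in> s" using P(1) unfolding I Vset_def Spec_def by simp
        qed
      next
        case Empty show ?case by simp
      next
        case (Int a b) then show ?case by blast
      next
        case (UN K) then show ?case by blast
      qed
      have "M \<in> Vset R (Idl {f})" unfolding Vset_def Spec_def
        using M genideal_minimal[OF Mi, of "{f}"] f J by blast
      then have "P \<in> Vset R (Idl {f})" using sp[OF gen] by blast
      then have "f \<in> P" unfolding Vset_def using genideal_self'[OF fc] by blast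
      then show False using f by blast
    qed
  next
    assume allmax: "\<forall>P. primeideal P R \<longrightarrow> maximalideal P R"
    have A: "generate_topology_on ?FB s" if "s \<in> ?ZB" for s
    proof -
      obtain I where I: "s = Spec R - Vset R I" "ideal I R" using \<open>s \<in> ?ZB\<close> by blast
      show ?thesis
      proof (rule gen_open_local)
        fix P assume "P \<in> s"
        then have P: "primeideal P R" "\<not> I \<subseteq> P" unfolding I Vset_def Spec_def by simp_all
        have Pi: "ideal P R" using P(1) primeideal.axioms(1) by blast
        have Pm: "maximalideal P R" using allmax P by blast
        obtain f where f: "f \<in> I" "f \<notin> P" using P(2) by blast
        have fc: "f \<in> carrier R" using ideal.Icarr[OF I(2) f(1)] .
        define K where "K = set_add R P (PIdl f)"
        have Ki: "ideal K R" unfolding K_def by (intro add_ideals Pi cgenideal_ideal fc)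
        have Kel: "K = {q \<oplus> r \<otimes> f | q r. q \<in> P \<and> r \<in> carrier R}"
          unfolding K_def set_add_def' cgenideal_def by blast
        have PK: "P \<subseteq> K"
        proof
          fix q assume qP: "q \<in> P"
          then have "q = q \<oplus> \<zero> \<otimes> f" using ideal.Icarr[OF Pi] fc by simp
          then show "q \<in> K" unfolding Kel mem_Collect_eq using qP
            by (intro exI[of _ q] exI[of _ "\<zero>"]) simp
        qed
        have z: "\<zero> \<in> P" using additive_subgroup.zero_closed[OF ideal.axioms(1)[OF Pi]] .
        have "f = \<zero> \<oplus> \<one> \<otimes> f" using fc by simp
        then have "f \<in> K" unfolding Kel mem_Collect_eq using z
          by (intro exI[of _ "\<zero>"] exI[of _ "\<one>"]) simp
        then have KP: "K \<noteq> P" using f(2) by blast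
        have Kc: "K \<subseteq> carrier R" using ideal.Icarr[OF Ki] by blast
        have "K = P \<or> K = carrier R" by (rule maximalideal.I_maximal[OF Pm Ki PK Kc])
        then have "K = carrier R" using KP by blast
        then have "\<one> \<in> K" using one_closed by simp
        then have "\<exists>g r. \<one> = g \<oplus> r \<otimes> f \<and> g \<in> P \<and> r \<in> carrier R" unfolding Kel by (simp only: mem_Collect_eq)
        then obtain g r where gr: "g \<in> P" "r \<in> carrier R" "g \<oplus> r \<otimes> f = \<one>" by metis
        have gc: "g \<in> carrier R" using ideal.Icarr[OF Pi gr(1)] .
        define W where "W = Vset R (Idl {g})"
        have "fin_gen_ideal R (Idl {g})" unfolding fin_gen_ideal_def
          using genideal_ideal[of "{g}"] gc by auto
        then have "generate_topology_on ?FB W" unfolding W_def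
          by (intro generate_topology_on.Basis) blast
        moreover have "P \<in> W" unfolding W_def Vset_def Spec_def
          using P(1) genideal_minimal[OF Pi, of "{g}"] gr(1) by blast
        moreover have "W \<subseteq> s"
        proof
          fix Q assume "Q \<in> W"
          then have Q0: "primeideal Q R" "Idl {g} \<subseteq> Q" by (simp_all add: W_def Vset_def Spec_def)
          have Q: "primeideal Q R" "g \<in> Q" using Q0 genideal_self'[OF gc] by blast+
          have Qi: "ideal Q R" using Q(1) primeideal.axioms(1) by blast
          have "\<not> I \<subseteq> Q"
          proof
            assume "I \<subseteq> Q"
            then have "f \<in> Q" using f(1) by blast
            then have "r \<otimes> f \<in> Q" by (rule ideal.I_l_closed[OF Qi _ gr(2)])
            then have "g \<oplus> r \<otimes> f \<in> Q" using Q(2) by (intro additive_subgroup.a_closed[OF ideal.axioms(1)[OF Qi]])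
            then have "\<one> \<in> Q" using gr(3) by simp
            then show False using ideal.one_imp_carrier[OF Qi] primeideal.I_notcarr[OF Q(1)] by simp
          qed
          then show "Q \<in> s" unfolding I Vset_def Spec_def using Q by blast
        qed
        ultimately show "\<exists>W. generate_topology_on ?FB W \<and> P \<in> W \<and> W \<subseteq> s" by blast
      qed
    qed
    have B: "generate_topology_on ?ZB s" if "s \<in> ?FB" for s
    proof -
      obtain I S where IS: "s = Vset R I" "I = Idl S" "finite S" "S \<subseteq> carrier R"
        using \<open>s \<in> ?FB\<close> unfolding fin_gen_ideal_def by blast
      show ?thesis
      proof (rule gen_open_local)
        fix P assume "P \<in> s"
        then have P: "primeideal P R" "I \<subseteq> P" unfolding IS Vset_def Spec_def by simp_all
        have Pi: "ideal P R" using P(1) primeideal.axioms(1) by blast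
        have SP: "S \<subseteq> P" using P(2) genideal_self[OF IS(4)] IS(2) by blast
        have ann: "\<exists>t. t \<in> carrier R \<and> t \<notin> P \<and> (\<exists>n::nat. t \<otimes> a [^] n = \<zero>)" if a: "a \<in> S" for a
        proof (rule ccontr)
          assume none: "\<not> ?thesis"
          have ac: "a \<in> carrier R" using a IS by blast
          define T where "T = {t \<otimes> a [^] (n::nat) | t n. t \<in> carrier R - P}"
          have Tin: "t \<otimes> a [^] (n::nat) \<in> T" if "t \<in> carrier R - P" for t n
            unfolding T_def using that by blast
          have Tel: "\<exists>t n. t \<in> carrier R - P \<and> x = t \<otimes> a [^] (n::nat)" if "x \<in> T" for x
            using that unfolding T_def by blast
          have Tc: "T \<subseteq> carrier R"
          proof
            fix x assume "x \<in> T"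
            then obtain t n where "t \<in> carrier R - P" "x = t \<otimes> a [^] (n::nat)" using Tel by blast
            then show "x \<in> carrier R" using ac by simp
          qed
          have one: "\<one> \<notin> P" using ideal.one_imp_carrier[OF Pi] primeideal.I_notcarr[OF P(1)] by auto
          have T1: "\<one> \<in> T" using Tin[of "\<one>" 0] one by simp
          have Tm: "x \<otimes> y \<in> T" if xyT: "x \<in> T" "y \<in> T" for x y
          proof -
            obtain t n where t1: "t \<in> carrier R - P" "x = t \<otimes> a [^] (n::nat)" using Tel xyT(1) by blast
            obtain t' m where t2: "t' \<in> carrier R - P" "y = t' \<otimes> a [^] (m::nat)" using Tel xyT(2) by blast
            have "x \<otimes> y = (t \<otimes> t') \<otimes> a [^] (n + m)"
              using t1 t2 ac by (simp add: nat_pow_mult[symmetric] m_ac)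
            moreover have "t \<otimes> t' \<in> carrier R - P"
              using primeideal.I_prime[OF P(1), of t t'] t1(1) t2(1) by auto
            ultimately show ?thesis using Tin by simp
          qed
          have "\<zero> \<notin> T"
          proof
            assume "\<zero> \<in> T"
            then obtain t n where tn: "t \<in> carrier R - P" "\<zero> = t \<otimes> a [^] (n::nat)" using Tel by blast
            then show False using none by auto
          qed
          then have "{\<zero>} \<inter> T = {}" by blast
          then obtain Q where Q: "primeideal Q R" "Q \<inter> T = {}"
            using prime_avoid[OF zeroideal Tc T1 Tm] by blast
          have QP: "Q \<subseteq> P"
          proof
            fix x assume x: "x \<in> Q"
            then have xc: "x \<in> carrier R" using ideal.Icarr[OF primeideal.axioms(1)[OF Q(1)]] by blast
            show "x \<in> P"
            proof (rule ccontr)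
              assume "x \<notin> P"
              then have "x \<otimes> a [^] (0::nat) \<in> T" using Tin xc by blast
              then have "x \<in> T" using xc by simp
              then show False using x Q(2) by blast
            qed
          qed
          have "\<one> \<otimes> a [^] (1::nat) \<in> T" using Tin one by blast
          then have "a \<in> T" using ac by simp
          then have "a \<notin> Q" using Q(2) by blast
          moreover have "P = Q \<or> P = carrier R"
            using maximalideal.I_maximal[OF allmax[rule_format, OF Q(1)] Pi QP] ideal.Icarr[OF Pi] by blast
          ultimately show False using a SP primeideal.I_notcarr[OF P(1)] by blast
        qed
        then obtain t where t: "\<And>a. a \<in> S \<Longrightarrow> t a \<in> carrier R \<and> t a \<notin> P \<and> (\<exists>n::nat. t a \<otimes> a [^] n = \<zero>)"
          by metis
        define W where "W = \<Inter> (insert (Spec R - Vset R (carrier R)) ((\<lambda>a. Spec R - Vset R (Idl {t a})) ` S))"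
        have "generate_topology_on ?ZB W" unfolding W_def
        proof (rule generate_topology_on_Inter)
          show "finite (insert (Spec R - Vset R (carrier R)) ((\<lambda>a. Spec R - Vset R (Idl {t a})) ` S))"
            using IS by simp
          fix K assume "K \<in> insert (Spec R - Vset R (carrier R)) ((\<lambda>a. Spec R - Vset R (Idl {t a})) ` S)"
          then show "generate_topology_on ?ZB K"
          proof
            assume "K = Spec R - Vset R (carrier R)"
            then show ?thesis using oneideal by (intro generate_topology_on.Basis) blast
          next
            assume "K \<in> (\<lambda>a. Spec R - Vset R (Idl {t a})) ` S"
            then obtain a where "a \<in> S" "K = Spec R - Vset R (Idl {t a})" by blast
            moreover then have "ideal (Idl {t a}) R" using genideal_ideal t by blast
            ultimately show ?thesis by (intro generate_topology_on.Basis) blast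
          qed
        qed simp
        moreover have "P \<in> W"
        proof -
          have "P \<in> Spec R" using P(1) unfolding Spec_def by simp
          moreover have "\<not> carrier R \<subseteq> P" using primeideal.I_notcarr[OF P(1)] ideal.Icarr[OF Pi] by blast
          moreover have "\<not> Idl {t a} \<subseteq> P" if "a \<in> S" for a
            using t[OF that] genideal_self'[of "t a"] by blast
          ultimately show ?thesis unfolding W_def Vset_def by blast
        qed
        moreover have "W \<subseteq> s"
        proof
          fix Q assume QW: "Q \<in> W"
          then have "Q \<in> Spec R" unfolding W_def by blast
          then have Q: "primeideal Q R" unfolding Spec_def by simp
          have Qi: "ideal Q R" using Q(1) primeideal.axioms(1) by blast
          have "a \<in> Q" if a: "a \<in> S" for a
          proof -
            have ac: "a \<in> carrier R" using a IS by blast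
            have "Q \<notin> Vset R (Idl {t a})" using QW a unfolding W_def by blast
            then have "\<not> Idl {t a} \<subseteq> Q" using Q unfolding Vset_def Spec_def by simp
            then have ta: "t a \<notin> Q" using genideal_minimal[OF Qi, of "{t a}"] by blast
            obtain n :: nat where n: "t a \<otimes> a [^] n = \<zero>" using t a by blast
            have "\<zero> \<in> Q" using additive_subgroup.zero_closed[OF ideal.axioms(1)[OF Qi]] .
            then have "a [^] n \<in> Q" using primeideal.I_prime[OF Q(1), of "t a" "a [^] n"] n ta t a ac by auto
            then show ?thesis using primeideal.pow_mem[OF Q(1) ac] by blast
          qed
          then have "I \<subseteq> Q" using IS genideal_minimal[OF Qi] by blast
          then show "Q \<in> s" unfolding IS(1) Vset_def Spec_def using Q by blast
        qed
        ultimately show "\<exists>W. generate_topology_on ?ZB W \<and> P \<in> W \<and> W \<subseteq> s" by blast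
      qed
    qed
    show "flat_topology R = zariski_topology R"
      unfolding topology_eq flat_topology_def zariski_topology_def openin_topology_generated_by_iff
    proof (intro allI iffI)
      fix S assume h: "generate_topology_on ?FB S"
      show "generate_topology_on ?ZB S" by (rule gen_mono[OF _ h]) (rule B)
    next
      fix S assume h: "generate_topology_on ?ZB S"
      show "generate_topology_on ?FB S" by (rule gen_mono[OF _ h]) (rule A)
    qed
  qed
qed

theorem corollary4p8:
  fixes R :: "('a, 'b) ring_scheme"
  assumes "cring R"
  shows "flat_topology R = zariski_topology R \<longleftrightarrow> (\<forall>P. primeideal P R \<longrightarrow> maximalideal P R)"
  using cring.main[OF assms] .

end
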